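(* For all integers $t$ and $\Delta$, the class of finite graphs of treewidth at most $t$ and maximum degree at most $\Delta$ has asymptotic dimension at most $1$.
   Context: Graphs are metric spaces with the shortest-path distance. Treewidth is the minimum width of a tree-decomposition (width being the maximum bag size minus one). For a metric space $(X,d)$, a family $\mathcal U$ of subsets is $D$-bounded if every member has diameter at most $D$, and $r$-disjoint if points in different members are at distance $>r$. A function $D:\mathbb{R}^+\to\mathbb{R}^+$ is an $n$-dimensional control function for $X$ if for every $r>0$ there is a cover $\mathcal U=\mathcal U_1\cup\dots\cup\mathcal U_{n+1}$ of $X$ with each $\mathcal U_i$ $r$-disjoint and each member $D(r)$-bounded; a class has asymptotic dimension at most $n$ if one such function works for all its members. *)

theory Defs
  imports Main "HOL-Library.Extended_Real"
begin

definition fin_graph :: "'a set \<Rightarrow> ('a \<times> 'a) set \<Rightarrow> bool" where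
  "fin_graph V E \<longleftrightarrow> finite V \<and> E \<subseteq> V \<times> V \<and> sym E \<and> (\<forall>x. (x, x) \<notin> E)"

definition is_walk :: "('a \<times> 'a) set \<Rightarrow> 'a list \<Rightarrow> bool" where
  "is_walk E xs \<longleftrightarrow> xs \<noteq> [] \<and> (\<forall>i. Suc i < length xs \<longrightarrow> (xs ! i, xs ! Suc i) \<in> E)"

text \<open>Shortest-path distance (infinite between different components).\<close>
definition gdist :: "('a \<times> 'a) set \<Rightarrow> 'a \<Rightarrow> 'a \<Rightarrow> ereal" where
  "gdist E u v = (INF xs \<in> {xs. is_walk E xs \<and> hd xs = u \<and> last xs = v}.
                    ereal (real (length xs - 1)))"

definition connected_in :: "('a \<times> 'a) set \<Rightarrow> 'a set \<Rightarrow> bool" where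
  "connected_in E S \<longleftrightarrow> (\<forall>u\<in>S. \<forall>v\<in>S. \<exists>xs. is_walk E xs \<and> set xs \<subseteq> S \<and> hd xs = u \<and> last xs = v)"

text \<open>A tree: a nonempty connected finite graph without cycles
  (every edge is a bridge, i.e. lies on no cycle).\<close>
definition is_tree :: "'b set \<Rightarrow> ('b \<times> 'b) set \<Rightarrow> bool" where
  "is_tree N F \<longleftrightarrow> fin_graph N F \<and> N \<noteq> {} \<and> connected_in F N \<and>
     (\<forall>(x, y) \<in> F. \<not> (\<exists>xs. is_walk (F - {(x, y), (y, x)}) xs \<and> hd xs = x \<and> last xs = y))"

definition tree_decomposition ::
  "'a set \<Rightarrow> ('a \<times> 'a) set \<Rightarrow> nat set \<Rightarrow> (nat \<times> nat) set \<Rightarrow> (nat \<Rightarrow> 'a set) \<Rightarrow> bool" where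
  "tree_decomposition V E N F B \<longleftrightarrow>
     is_tree N F \<and>
     (\<forall>n\<in>N. B n \<subseteq> V) \<and>
     (\<forall>v\<in>V. \<exists>n\<in>N. v \<in> B n) \<and>
     (\<forall>(u, v)\<in>E. \<exists>n\<in>N. u \<in> B n \<and> v \<in> B n) \<and>
     (\<forall>v\<in>V. connected_in F {n\<in>N. v \<in> B n})"

text \<open>Width = maximum bag size minus one; treewidth = minimum width.
  (Integer-valued, so the empty graph has treewidth -1.)\<close>
definition td_width :: "nat set \<Rightarrow> (nat \<Rightarrow> 'a set) \<Rightarrow> int" where
  "td_width N B = int (Max ((\<lambda>n. card (B n)) ` N)) - 1"

definition treewidth :: "'a set \<Rightarrow> ('a \<times> 'a) set \<Rightarrow> int" where
  "treewidth V E = (LEAST k. \<exists>N F B. tree_decomposition V E N F B \<and> td_width N B = k)"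

definition max_degree :: "'a set \<Rightarrow> ('a \<times> 'a) set \<Rightarrow> nat" where
  "max_degree V E = Max (insert 0 ((\<lambda>v. card {u. (v, u) \<in> E}) ` V))"

definition r_disjoint :: "('a \<times> 'a) set \<Rightarrow> real \<Rightarrow> 'a set set \<Rightarrow> bool" where
  "r_disjoint E r \<U> \<longleftrightarrow>
     (\<forall>A\<in>\<U>. \<forall>B\<in>\<U>. A \<noteq> B \<longrightarrow> (\<forall>x\<in>A. \<forall>y\<in>B. gdist E x y > ereal r))"

definition D_bounded :: "('a \<times> 'a) set \<Rightarrow> real \<Rightarrow> 'a set set \<Rightarrow> bool" where
  "D_bounded E D \<U> \<longleftrightarrow> (\<forall>A\<in>\<U>. \<forall>x\<in>A. \<forall>y\<in>A. gdist E x y \<le> ereal D)"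

definition control_function :: "nat \<Rightarrow> (real \<Rightarrow> real) \<Rightarrow> 'a set \<Rightarrow> ('a \<times> 'a) set \<Rightarrow> bool" where
  "control_function n D V E \<longleftrightarrow>
     (\<forall>r>0. \<exists>\<U> :: nat \<Rightarrow> 'a set set.
        (\<Union>i\<le>n. \<Union>(\<U> i)) = V \<and>
        (\<forall>i\<le>n. r_disjoint E r (\<U> i) \<and> D_bounded E (D r) (\<U> i)))"

definition asdim_at_most :: "nat \<Rightarrow> ('a set \<times> ('a \<times> 'a) set) set \<Rightarrow> bool" where
  "asdim_at_most n C \<longleftrightarrow>
     (\<exists>D :: real \<Rightarrow> real. (\<forall>r>0. D r > 0) \<and> (\<forall>(V, E)\<in>C. control_function n D V E))"

end

theory Submission
  imports Defs
begin


lemma is_walk_single[simp]: "is_walk E [x]"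
  by (simp add: is_walk_def)

lemma is_walk_Nil[simp]: "\<not> is_walk E []"
  by (simp add: is_walk_def)

lemma is_walk_Cons2[simp]: "is_walk E (x # y # xs) \<longleftrightarrow> (x, y) \<in> E \<and> is_walk E (y # xs)"
proof
  assume h: "is_walk E (x # y # xs)"
  have "(x,y) \<in> E" using h unfolding is_walk_def by (metis Suc_less_eq length_Cons nth_Cons_0 nth_Cons_Suc zero_less_Suc)
  moreover have "is_walk E (y # xs)" using h unfolding is_walk_def
    by (metis Suc_less_eq length_Cons list.discI nth_Cons_Suc)
  ultimately show "(x, y) \<in> E \<and> is_walk E (y # xs)" by blast
next
  assume h: "(x, y) \<in> E \<and> is_walk E (y # xs)"
  show "is_walk E (x # y # xs)" unfolding is_walk_def
  proof (intro conjI allI impI)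
    fix i assume "Suc i < length (x # y # xs)"
    then show "((x # y # xs) ! i, (x # y # xs) ! Suc i) \<in> E"
      using h unfolding is_walk_def by (cases i) auto
  qed simp
qed

lemma is_walk_Cons: "is_walk E (x # xs) \<longleftrightarrow> xs = [] \<or> ((x, hd xs) \<in> E \<and> is_walk E xs)"
  by (cases xs) auto

lemma is_walk_append:
  "is_walk E xs \<Longrightarrow> is_walk E ys \<Longrightarrow> (last xs, hd ys) \<in> E \<Longrightarrow> is_walk E (xs @ ys)"
proof (induction xs)
  case Nil then show ?case by simp
next
  case (Cons x xs)
  show ?case
  proof (cases xs)
    case Nil
    then show ?thesis using Cons.prems by (cases ys) auto
  next
    case (Cons z zs)
    then show ?thesis using Cons.prems Cons.IH by auto
  qed
qed

lemma is_walk_join: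
  assumes "is_walk E xs" "is_walk E ys" "last xs = hd ys"
  shows "is_walk E (xs @ tl ys)"
proof (cases "tl ys")
  case Nil then show ?thesis using assms by simp
next
  case (Cons z zs)
  have ys: "ys = hd ys # z # zs" using Cons assms(2)
    by (metis is_walk_Nil list.collapse)
  then have "(hd ys, z) \<in> E" "is_walk E (z # zs)" using assms(2) by (metis is_walk_Cons2)+
  then show ?thesis using is_walk_append[OF assms(1), of "tl ys"] Cons assms(3) by simp
qed

lemma is_walk_rev:
  assumes "sym E" "is_walk E xs" shows "is_walk E (rev xs)"
  using assms(2)
proof (induction xs)
  case Nil then show ?case by simp
next
  case (Cons x xs)
  show ?case
  proof (cases xs)
    case Nil then show ?thesis by simp
  next
    case (Cons z zs)
    have "is_walk E (rev xs)" using Cons.IH Cons.prems \<open>xs = z # zs\<close> by auto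
    moreover have "(last (rev xs), hd [x]) \<in> E" using Cons.prems \<open>xs = z # zs\<close> assms(1)
      by (auto dest: symD)
    ultimately show ?thesis using is_walk_append[of E "rev xs" "[x]"] by simp
  qed
qed

lemma is_walk_mono: "is_walk E xs \<Longrightarrow> E \<subseteq> E' \<Longrightarrow> is_walk E' xs"
  unfolding is_walk_def by blast

lemma is_walk_set:
  assumes "is_walk E xs" "E \<subseteq> V \<times> V" "hd xs \<in> V" shows "set xs \<subseteq> V"
  using assms
proof (induction xs)
  case Nil then show ?case by simp
next
  case (Cons x xs)
  then show ?case by (cases xs) auto
qed

lemma is_walk_nth_E:
  "is_walk E xs \<Longrightarrow> Suc i < length xs \<Longrightarrow> (xs ! i, xs ! Suc i) \<in> E"
  by (simp add: is_walk_def)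

lemma is_walk_take: "is_walk E xs \<Longrightarrow> 0 < n \<Longrightarrow> is_walk E (take n xs)"
  unfolding is_walk_def by auto

lemma is_walk_drop: "is_walk E xs \<Longrightarrow> n < length xs \<Longrightarrow> is_walk E (drop n xs)"
  unfolding is_walk_def by auto



definition walks :: "('a \<times> 'a) set \<Rightarrow> 'a \<Rightarrow> 'a \<Rightarrow> 'a list set" where
  "walks E u v = {xs. is_walk E xs \<and> hd xs = u \<and> last xs = v}"

lemma gdist_walks: "gdist E u v = (INF xs \<in> walks E u v. ereal (real (length xs - 1)))"
  unfolding gdist_def walks_def by simp

lemma gdist_le_walk:
  assumes "is_walk E xs" "hd xs = u" "last xs = v"
  shows "gdist E u v \<le> ereal (real (length xs - 1))"
proof -
  have "xs \<in> walks E u v" using assms by (simp add: walks_def)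
  then show ?thesis unfolding gdist_walks by (rule INF_lower)
qed

lemma gdist_attained:
  assumes "walks E u v \<noteq> {}"
  shows "\<exists>xs \<in> walks E u v. gdist E u v = ereal (real (length xs - 1))"
proof -
  obtain xs0 where "xs0 \<in> walks E u v" using assms by blast
  then obtain xs where xs: "xs \<in> walks E u v"
    and min: "\<And>ys. ys \<in> walks E u v \<Longrightarrow> length xs - 1 \<le> length ys - 1"
    using ex_has_least_nat[of "\<lambda>xs. xs \<in> walks E u v" xs0 "\<lambda>xs. length xs - 1"] by blast
  have "gdist E u v = ereal (real (length xs - 1))"
    unfolding gdist_walks
  proof (rule antisym)
    show "(INF xs\<in>walks E u v. ereal (real (length xs - 1))) \<le> ereal (real (length xs - 1))"
      using xs by (rule INF_lower)
    show "ereal (real (length xs - 1)) \<le> (INF xs\<in>walks E u v. ereal (real (length xs - 1)))"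
      proof (rule INF_greatest)
      fix ys assume "ys \<in> walks E u v"
      then have "length xs - 1 \<le> length ys - 1" by (rule min)
      then show "ereal (real (length xs - 1)) \<le> ereal (real (length ys - 1))" by simp
    qed
  qed
  then show ?thesis using xs by (intro bexI[OF _ xs])
qed

lemma gdist_le_iff:
  "gdist E u v \<le> ereal r \<longleftrightarrow> (\<exists>xs. is_walk E xs \<and> hd xs = u \<and> last xs = v \<and> real (length xs - 1) \<le> r)"
proof
  assume h: "gdist E u v \<le> ereal r"
  have "walks E u v \<noteq> {}"
  proof
    assume e: "walks E u v = {}"
    have "gdist E u v = \<infinity>" unfolding gdist_walks e INF_empty top_ereal_def ..
    with h show False by simp
  qed
  then have "\<exists>xs\<in>walks E u v. gdist E u v = ereal (real (length xs - 1))" by (rule gdist_attained)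
  then obtain xs where "xs \<in> walks E u v" "gdist E u v = ereal (real (length xs - 1))"
    by blast
  then show "\<exists>xs. is_walk E xs \<and> hd xs = u \<and> last xs = v \<and> real (length xs - 1) \<le> r"
  proof -
    fix xs assume a: "xs \<in> walks E u v" "gdist E u v = ereal (real (length xs - 1))"
    then have "ereal (real (length xs - 1)) \<le> ereal r" using h by simp
    then have "real (length xs - 1) \<le> r" by simp
    then show ?thesis using a(1) unfolding walks_def by blast
  qed
next
  assume "\<exists>xs. is_walk E xs \<and> hd xs = u \<and> last xs = v \<and> real (length xs - 1) \<le> r"
  then obtain xs where "is_walk E xs" "hd xs = u" "last xs = v" "real (length xs - 1) \<le> r" by blast
  then show "gdist E u v \<le> ereal r"
    using gdist_le_walk[of E xs u v] by (meson ereal_less_eq(3) order_trans)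
qed

lemma gdist_self: "gdist E u u \<le> ereal r \<longleftrightarrow> 0 \<le> r"
  unfolding gdist_le_iff
proof
  assume "0 \<le> r" then show "\<exists>xs. is_walk E xs \<and> hd xs = u \<and> last xs = u \<and> real (length xs - 1) \<le> r"
    by (intro exI[of _ "[u]"]) simp
next
  assume "\<exists>xs. is_walk E xs \<and> hd xs = u \<and> last xs = u \<and> real (length xs - 1) \<le> r"
  then obtain xs :: "'a list" where "real (length xs - 1) \<le> r" by blast
  then show "0 \<le> r" using of_nat_0_le_iff order_trans by blast
qed



lemma fin_graph_sub: "fin_graph V E \<Longrightarrow> E \<subseteq> V \<times> V"
  by (simp add: fin_graph_def)

lemma walk_to_ex:
  assumes "connected_in F N" "\<rho> \<in> N" "x \<in> N"
  shows "\<exists>k xs. is_walk F xs \<and> hd xs = \<rho> \<and> last xs = x \<and> length xs = Suc k"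
proof -
  obtain xs where "is_walk F xs" "hd xs = \<rho>" "last xs = x" using assms unfolding connected_in_def by blast
  then show ?thesis by (intro exI[of _ "length xs - 1"] exI[of _ xs]) (auto simp: is_walk_def)
qed

lemma rooted_tree:
  assumes T: "is_tree N F"
  obtains \<rho> dep p where "\<rho> \<in> N" "dep \<rho> = (0::nat)" "\<And>x. x \<in> N \<Longrightarrow> dep x = 0 \<Longrightarrow> x = \<rho>"
    "\<And>x. x \<in> N \<Longrightarrow> x \<noteq> \<rho> \<Longrightarrow> p x \<in> N \<and> (x, p x) \<in> F \<and> dep (p x) + 1 = dep x"
    "\<And>x y. (x, y) \<in> F \<Longrightarrow> (x \<noteq> \<rho> \<and> y = p x) \<or> (y \<noteq> \<rho> \<and> x = p y)"
    "p \<rho> = \<rho>"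
proof -
  have fg: "fin_graph N F" and ne: "N \<noteq> {}" and conn: "connected_in F N"
    and br: "\<And>x y. (x,y) \<in> F \<Longrightarrow> \<not> (\<exists>xs. is_walk (F - {(x, y), (y, x)}) xs \<and> hd xs = x \<and> last xs = y)"
    using T unfolding is_tree_def by auto
  have FN: "F \<subseteq> N \<times> N" and symF: "sym F" using fg unfolding fin_graph_def by auto
  obtain \<rho> where r: "\<rho> \<in> N" using ne by blast
  define W where "W x k \<longleftrightarrow> (\<exists>xs. is_walk F xs \<and> hd xs = \<rho> \<and> last xs = x \<and> length xs = Suc k)" for x k
  define dep where "dep x = (LEAST k. W x k)" for x
  have Wex: "\<exists>k. W x k" if "x \<in> N" for x using walk_to_ex[OF conn r that] unfolding W_def .
  have depW: "W x (dep x)" if "x \<in> N" for x using Wex[OF that] unfolding dep_def by (rule LeastI_ex)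
  have depmin: "dep x \<le> k" if "W x k" for x k using that unfolding dep_def by (rule Least_le)
  have "W \<rho> 0" unfolding W_def by (intro exI[of _ "[\<rho>]"]) simp
  then have d0: "dep \<rho> = 0" using depmin by fastforce
  have d0r: "x = \<rho>" if "x \<in> N" "dep x = 0" for x
  proof -
    from depW[OF that(1)] that(2) obtain xs where "hd xs = \<rho>" "last xs = x" "length xs = 1"
      unfolding W_def by auto
    then show ?thesis by (cases xs) auto
  qed
  have step: "dep y \<le> dep x + 1" if "(x, y) \<in> F" "x \<in> N" for x y
  proof -
    from depW[OF that(2)] obtain xs where xs: "is_walk F xs" "hd xs = \<rho>" "last xs = x" "length xs = Suc (dep x)"
      unfolding W_def by auto
    have "is_walk F (xs @ [y])" using is_walk_append[OF xs(1), of "[y]"] xs that by auto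
    moreover have "hd (xs @ [y]) = \<rho>" using xs by (cases xs) auto
    ultimately have "W y (dep x + 1)" unfolding W_def using xs by (intro exI[of _ "xs @ [y]"]) auto
    then show ?thesis by (rule depmin)
  qed
  have par: "\<exists>z. z \<in> N \<and> (x, z) \<in> F \<and> dep z + 1 = dep x" if "x \<in> N" "x \<noteq> \<rho>" for x
  proof -
    have pos: "dep x > 0" using d0r that by blast
    from depW[OF that(1)] obtain xs where xs: "is_walk F xs" "hd xs = \<rho>" "last xs = x" "length xs = Suc (dep x)"
      unfolding W_def by auto
    define z where "z = xs ! (dep x - 1)"
    have "xs \<noteq> []" using xs(4) by auto
    then have lx: "xs ! dep x = x" using last_conv_nth[of xs] xs(3,4) by simp
    have zx: "(z, x) \<in> F" using is_walk_nth_E[OF xs(1), of "dep x - 1"] pos xs(3,4) lx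
      by (simp add: z_def)
    have "is_walk F (take (dep x) xs)" using is_walk_take[OF xs(1)] pos by simp
    moreover have "hd (take (dep x) xs) = \<rho>" using xs pos by (cases xs) auto
    moreover have "last (take (dep x) xs) = z"
    proof -
      have tne: "take (dep x) xs \<noteq> []" using pos xs(4) by (cases xs) auto
      have "length (take (dep x) xs) = dep x" using xs(4) by simp
      then have "last (take (dep x) xs) = take (dep x) xs ! (dep x - 1)" using last_conv_nth[OF tne] by simp
      also have "\<dots> = z" unfolding z_def using pos by simp
      finally show ?thesis .
    qed
    moreover have "length (take (dep x) xs) = Suc (dep x - 1)" using xs pos by simp
    ultimately have "W z (dep x - 1)" unfolding W_def by blast
    then have "dep z \<le> dep x - 1" by (rule depmin)
    moreover have zN: "z \<in> N" using zx FN by auto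
    moreover have "dep x \<le> dep z + 1" using step[OF zx zN] .
    moreover have "(x, z) \<in> F" using zx symF by (auto dest: symD)
    ultimately show ?thesis using pos by (intro exI[of _ z]) auto
  qed
  define p where "p x = (if x = \<rho> then \<rho> else SOME z. z \<in> N \<and> (x, z) \<in> F \<and> dep z + 1 = dep x)" for x
  have pP: "p x \<in> N \<and> (x, p x) \<in> F \<and> dep (p x) + 1 = dep x" if "x \<in> N" "x \<noteq> \<rho>" for x
    unfolding p_def using someI_ex[OF par[OF that]] that(2) by simp
  define P where "P = {(u, p u) | u. u \<in> N \<and> u \<noteq> \<rho>}"
  have up: "\<exists>xs. is_walk P xs \<and> hd xs = x \<and> last xs = \<rho>" if "x \<in> N" for x
  proof -
    have "\<forall>x\<in>N. dep x = n \<longrightarrow> (\<exists>xs. is_walk P xs \<and> hd xs = x \<and> last xs = \<rho>)" for n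
    proof (induction n)
      case 0 then show ?case using d0r by (auto intro!: exI[of _ "[\<rho>]"])
    next
      case (Suc n)
      show ?case
      proof (intro ballI impI)
        fix x assume x: "x \<in> N" "dep x = Suc n"
        then have xr: "x \<noteq> \<rho>" using d0 by auto
        then have "p x \<in> N" "dep (p x) = n" using pP[OF x(1)] x(2) by auto
        then obtain xs where xs: "is_walk P xs" "hd xs = p x" "last xs = \<rho>" using Suc.IH by blast
        have "(x, p x) \<in> P" unfolding P_def using x xr by blast
        then have "is_walk P (x # xs)" using xs is_walk_Cons[of P x xs] by auto
        then show "\<exists>xs. is_walk P xs \<and> hd xs = x \<and> last xs = \<rho>" using xs
          by (intro exI[of _ "x # xs"]) (auto simp: is_walk_def)
      qed
    qed
    then show ?thesis using that by blast
  qed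
  have key: "y = p x" if "(x, y) \<in> F" "dep y \<le> dep x" for x y
  proof (rule ccontr)
    assume ne: "y \<noteq> p x"
    have xN: "x \<in> N" and yN: "y \<in> N" using that FN by auto
    have PF: "P \<subseteq> F - {(x, y), (y, x)}"
    proof
      fix e assume "e \<in> P"
      then obtain u where u: "e = (u, p u)" "u \<in> N" "u \<noteq> \<rho>" unfolding P_def by blast
      have "e \<noteq> (x, y)" using u ne by auto
      moreover have "e \<noteq> (y, x)" using u pP[OF u(2,3)] that(2) by auto
      ultimately show "e \<in> F - {(x, y), (y, x)}" using pP[OF u(2,3)] u(1) by auto
    qed
    have PF': "P\<inverse> \<subseteq> F - {(x, y), (y, x)}"
    proof
      fix e assume "e \<in> P\<inverse>"
      then obtain a b where e: "e = (a, b)" "(b, a) \<in> P" by auto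
      then have "(b, a) \<in> F" "(b, a) \<noteq> (x, y)" "(b, a) \<noteq> (y, x)" using PF by auto
      then show "e \<in> F - {(x, y), (y, x)}" using e(1) symF by (auto dest: symD)
    qed
    obtain xs where xs: "is_walk P xs" "hd xs = x" "last xs = \<rho>" using up[OF xN] by blast
    obtain ys where ys: "is_walk P ys" "hd ys = y" "last ys = \<rho>" using up[OF yN] by blast
    have "sym (P \<union> P\<inverse>)" by (auto simp: sym_def)
    have w1: "is_walk (P \<union> P\<inverse>) xs" using xs(1) by (rule is_walk_mono) auto
    have w2: "is_walk (P \<union> P\<inverse>) (rev ys)"
      by (rule is_walk_rev[OF \<open>sym (P \<union> P\<inverse>)\<close>]) (rule is_walk_mono[OF ys(1)], auto)
    have ysne: "ys \<noteq> []" using ys(1) by auto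
    have "is_walk (P \<union> P\<inverse>) (xs @ tl (rev ys))"
      by (rule is_walk_join[OF w1 w2]) (use xs ys ysne in \<open>simp add: hd_rev\<close>)
    moreover have "P \<union> P\<inverse> \<subseteq> F - {(x, y), (y, x)}" using PF PF' by (rule Un_least)
    ultimately have "is_walk (F - {(x, y), (y, x)}) (xs @ tl (rev ys))"
      by (rule is_walk_mono)
    moreover have "hd (xs @ tl (rev ys)) = x" using xs by (cases xs) auto
    moreover have "last (xs @ tl (rev ys)) = y"
    proof (cases "tl (rev ys)")
      case Nil
      then show ?thesis using xs ys ysne by (cases ys rule: rev_cases) auto
    next
      case (Cons a l)
      then have "last (tl (rev ys)) = last (rev ys)" by (metis last_tl list.distinct(1))
      then show ?thesis using Cons ys ysne by (simp add: last_rev)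
    qed
    ultimately show False using br[OF that(1)] by blast
  qed
  have irr: "(x, x) \<notin> F" for x using fg unfolding fin_graph_def by auto
  have edge: "(x \<noteq> \<rho> \<and> y = p x) \<or> (y \<noteq> \<rho> \<and> x = p y)" if "(x, y) \<in> F" for x y
  proof (cases "dep y \<le> dep x")
    case True
    have "x \<noteq> \<rho>"
    proof
      assume "x = \<rho>"
      then have "dep y = 0" using True d0 by simp
      then have "y = \<rho>" using d0r that FN by auto
      then show False using \<open>x = \<rho>\<close> that irr by simp
    qed
    then show ?thesis using key[OF that True] by blast
  next
    case False
    have yx: "(y, x) \<in> F" using that symF by (auto dest: symD)
    have "y \<noteq> \<rho>"
    proof
      assume "y = \<rho>"
      then have "dep x = 0" using False d0 by simp
      then have "x = \<rho>" using d0r that FN by auto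
      then show False using \<open>y = \<rho>\<close> that irr by simp
    qed
    then show ?thesis using key[OF yx] False by auto
  qed
  show ?thesis
  proof (rule that[of \<rho> dep p])
    show "\<rho> \<in> N" by (rule r)
    show "dep \<rho> = 0" by (rule d0)
    show "x = \<rho>" if "x \<in> N" "dep x = 0" for x using d0r that .
    show "p x \<in> N \<and> (x, p x) \<in> F \<and> dep (p x) + 1 = dep x" if "x \<in> N" "x \<noteq> \<rho>" for x
      using pP that .
    show "(x \<noteq> \<rho> \<and> y = p x) \<or> (y \<noteq> \<rho> \<and> x = p y)" if "(x, y) \<in> F" for x y using edge that .
    show "p \<rho> = \<rho>" by (simp add: p_def)
  qed
qed



definition conn :: "('a \<times> 'a) set \<Rightarrow> 'a set \<Rightarrow> ('a \<times> 'a) set" where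
  "conn E A = {(x, y). (x, y) \<in> E \<and> x \<in> A \<and> y \<in> A}"

definition reach :: "('a \<times> 'a) set \<Rightarrow> 'a set \<Rightarrow> 'a \<Rightarrow> 'a set" where
  "reach E A u = {v. (u, v) \<in> (conn E A)\<^sup>*}"

lemma walk_closed:
  assumes cl: "\<And>x y. (x, y) \<in> F \<Longrightarrow> x \<in> A \<Longrightarrow> y \<noteq> n \<Longrightarrow> y \<in> A"
  shows "is_walk F xs \<Longrightarrow> hd xs \<in> A \<Longrightarrow> n \<notin> set xs \<Longrightarrow> last xs \<in> A"
proof (induction xs)
  case Nil then show ?case by simp
next
  case (Cons x xs)
  show ?case
  proof (cases xs)
    case Nil then show ?thesis using Cons.prems by simp
  next
    case (Cons z zs)
    have "(x, z) \<in> F" "is_walk F xs" using Cons.prems(1) \<open>xs = z # zs\<close> by auto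
    moreover have "z \<noteq> n" using Cons.prems(3) \<open>xs = z # zs\<close> by auto
    ultimately have "z \<in> A" using cl Cons.prems(2) by simp
    then have "last xs \<in> A" using Cons.IH \<open>is_walk F xs\<close> Cons.prems(3) \<open>xs = z # zs\<close> by simp
    then show ?thesis using \<open>xs = z # zs\<close> by simp
  qed
qed

locale rtd =
  fixes V :: "'a set" and E N F B \<rho> and dep :: "nat \<Rightarrow> nat" and p
  assumes td: "tree_decomposition V E N F B"
  and r: "\<rho> \<in> N" and d0: "dep \<rho> = 0" and d0r: "\<And>x. x \<in> N \<Longrightarrow> dep x = 0 \<Longrightarrow> x = \<rho>"
  and pP: "\<And>x. x \<in> N \<Longrightarrow> x \<noteq> \<rho> \<Longrightarrow> p x \<in> N \<and> (x, p x) \<in> F \<and> dep (p x) + 1 = dep x"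
  and edge: "\<And>x y. (x, y) \<in> F \<Longrightarrow> (x \<noteq> \<rho> \<and> y = p x) \<or> (y \<noteq> \<rho> \<and> x = p y)"
  and pr: "p \<rho> = \<rho>"
begin

lemma tree: "is_tree N F" using td unfolding tree_decomposition_def by simp
lemma FN: "F \<subseteq> N \<times> N" using tree unfolding is_tree_def fin_graph_def by auto
lemma finN: "finite N" using tree unfolding is_tree_def fin_graph_def by auto
lemma bag_cover: "v \<in> V \<Longrightarrow> \<exists>n\<in>N. v \<in> B n" using td unfolding tree_decomposition_def by auto
lemma bag_sub: "n \<in> N \<Longrightarrow> B n \<subseteq> V" using td unfolding tree_decomposition_def by auto
lemma bag_edge: "(u, v) \<in> E \<Longrightarrow> \<exists>n\<in>N. u \<in> B n \<and> v \<in> B n" using td unfolding tree_decomposition_def by auto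
lemma bag_conn: "v \<in> V \<Longrightarrow> connected_in F {n\<in>N. v \<in> B n}" using td unfolding tree_decomposition_def by auto

lemma pN: "x \<in> N \<Longrightarrow> p x \<in> N" using pP pr by metis

lemma ppN: "x \<in> N \<Longrightarrow> (p ^^ k) x \<in> N"
  by (induction k) (auto simp: pN)

definition sub :: "nat \<Rightarrow> nat set" where
  "sub m = {x \<in> N. \<exists>k. (p ^^ k) x = m}"

lemma sub_root: "sub \<rho> = N"
proof -
  have "\<forall>x\<in>N. dep x = m \<longrightarrow> (p ^^ m) x = \<rho>" for m
  proof (induction m)
    case 0 then show ?case using d0r by auto
  next
    case (Suc m)
    show ?case
    proof (intro ballI impI)
      fix x assume x: "x \<in> N" "dep x = Suc m"
      then have "x \<noteq> \<rho>" using d0 by auto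
      then have "p x \<in> N" "dep (p x) = m" using pP[OF x(1)] x(2) by auto
      then have "(p ^^ m) (p x) = \<rho>" using Suc.IH by blast
      then show "(p ^^ Suc m) x = \<rho>" by (simp add: funpow_Suc_right del: funpow.simps)
    qed
  qed
  then show ?thesis unfolding sub_def by blast
qed

lemma sub_child_closed:
  assumes c: "c \<in> N" "c \<noteq> \<rho>" "p c = n" and xy: "(x, y) \<in> F" "x \<in> sub c" "y \<noteq> n"
  shows "y \<in> sub c"
proof -
  have yN: "y \<in> N" using xy FN by auto
  obtain k where k: "(p ^^ k) x = c" using xy unfolding sub_def by blast
  from edge[OF xy(1)] show ?thesis
  proof
    assume a: "x \<noteq> \<rho> \<and> y = p x"
    show ?thesis
    proof (cases k)
      case 0 then show ?thesis using k a c xy by simp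
    next
      case (Suc j)
      then have "(p ^^ j) y = c" using k a by (simp add: funpow_Suc_right del: funpow.simps)
      then show ?thesis using yN unfolding sub_def by blast
    qed
  next
    assume a: "y \<noteq> \<rho> \<and> x = p y"
    then have "(p ^^ Suc k) y = c" using k by (simp add: funpow_Suc_right del: funpow.simps)
    then show ?thesis using yN unfolding sub_def by blast
  qed
qed

lemma nsub_closed:
  assumes xy: "(x, y) \<in> F" "x \<notin> sub n" "y \<noteq> n"
  shows "y \<notin> sub n"
proof
  assume "y \<in> sub n"
  then obtain k where k: "(p ^^ k) y = n" unfolding sub_def by blast
  have xN: "x \<in> N" using xy FN by auto
  from edge[OF xy(1)] show False
  proof
    assume a: "x \<noteq> \<rho> \<and> y = p x"
    then have "(p ^^ Suc k) x = n" using k by (simp add: funpow_Suc_right del: funpow.simps)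
    then show False using xy xN unfolding sub_def by blast
  next
    assume a: "y \<noteq> \<rho> \<and> x = p y"
    show False
    proof (cases k)
      case 0 then show False using k xy by simp
    next
      case (Suc j)
      then have "(p ^^ j) x = n" using k a by (simp add: funpow_Suc_right del: funpow.simps)
      then show False using xy xN unfolding sub_def by blast
    qed
  qed
qed

lemma sub_child:
  assumes "x \<in> sub n" "x \<noteq> n"
  shows "\<exists>c. c \<in> N \<and> c \<noteq> \<rho> \<and> p c = n \<and> x \<in> sub c"
proof -
  have xN: "x \<in> N" using assms unfolding sub_def by auto
  obtain k0 where "(p ^^ k0) x = n" using assms unfolding sub_def by blast
  then obtain k where k: "(p ^^ k) x = n" and kmin: "\<And>j. j < k \<Longrightarrow> (p ^^ j) x \<noteq> n"
    using exists_least_iff[of "\<lambda>k. (p ^^ k) x = n"] by blast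
  have "k \<noteq> 0" using k assms by (cases k) auto
  then obtain j where j: "k = Suc j" by (cases k) auto
  define c where "c = (p ^^ j) x"
  have pc: "p c = n" using k j by (simp add: c_def)
  have cn: "c \<noteq> n" using kmin[of j] j by (simp add: c_def)
  have cr: "c \<noteq> \<rho>" using pc cn pr by auto
  have cN: "c \<in> N" using ppN[OF xN] by (simp add: c_def)
  have "x \<in> sub c" using xN unfolding sub_def c_def by blast
  then show ?thesis using cN cr pc by blast
qed

definition nodes :: "'a \<Rightarrow> nat set" where
  "nodes v = {x \<in> N. v \<in> B x}"

lemma nodes_closed:
  assumes cl: "\<And>x y. (x, y) \<in> F \<Longrightarrow> x \<in> A \<Longrightarrow> y \<noteq> n \<Longrightarrow> y \<in> A"
  and v: "v \<in> V" "v \<notin> B n" and x: "x \<in> nodes v" "x \<in> A"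
  shows "nodes v \<subseteq> A"
proof
  fix y assume y: "y \<in> nodes v"
  obtain xs where xs: "is_walk F xs" "set xs \<subseteq> nodes v" "hd xs = x" "last xs = y"
    using bag_conn[OF v(1)] x(1) y unfolding connected_in_def nodes_def by blast
  have "n \<notin> set xs" using xs(2) v(2) unfolding nodes_def by auto
  then show "y \<in> A" using walk_closed[OF cl xs(1)] xs x(2) by auto
qed

lemma reach_closed:
  assumes cl: "\<And>x y. (x, y) \<in> F \<Longrightarrow> x \<in> A \<Longrightarrow> y \<noteq> n \<Longrightarrow> y \<in> A"
  and u: "u \<in> V" "u \<notin> B n" "nodes u \<subseteq> A" and w: "w \<in> reach E (V - B n) u"
  shows "nodes w \<subseteq> A"
proof -
  have "(u, w) \<in> (conn E (V - B n))\<^sup>*" using w unfolding reach_def by simp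
  then show ?thesis
  proof (induction rule: rtrancl_induct)
    case base then show ?case using u by simp
  next
    case (step y z)
    have yz: "(y, z) \<in> E" "y \<in> V - B n" "z \<in> V - B n" using step.hyps(2) unfolding conn_def by auto
    obtain x where x: "x \<in> N" "y \<in> B x" "z \<in> B x" using bag_edge[OF yz(1)] by blast
    have "x \<in> A" using step.IH x unfolding nodes_def by auto
    then show ?case using nodes_closed[OF cl, where v=z and x=x] yz x unfolding nodes_def by auto
  qed
qed

definition Y :: "nat \<Rightarrow> 'a set" where
  "Y m = {v \<in> V. \<exists>x\<in>sub m. v \<in> B x}"

lemma separator:
  assumes W: "W \<subseteq> V" "finite V"
  shows "\<exists>n\<in>N. \<forall>u \<in> V - B n. 2 * card (W \<inter> reach E (V - B n) u) \<le> card W"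
proof (cases "W = {}")
  case True then show ?thesis using r by auto
next
  case False
  have finW: "finite W" using W finite_subset by auto
  define heavy where "heavy m \<longleftrightarrow> m \<in> N \<and> card W < 2 * card (W \<inter> Y m)" for m
  have "Y \<rho> = V" unfolding Y_def sub_root using bag_cover by auto
  then have "heavy \<rho>" using r False finW W unfolding heavy_def
    by (simp add: Int_absorb2 card_gt_0_iff)
  moreover have "\<forall>m. heavy m \<longrightarrow> dep m < Suc (Max (dep ` N))"
    using finN unfolding heavy_def by (auto simp: le_imp_less_Suc)
  ultimately obtain n where n: "heavy n" and nmax: "\<And>m. heavy m \<Longrightarrow> dep m \<le> dep n"
    using ex_has_greatest_nat[of heavy \<rho> dep] by blast
  have nN: "n \<in> N" using n unfolding heavy_def by simp
  show ?thesis
  proof (intro bexI[OF _ nN] ballI)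
    fix u assume u: "u \<in> V - B n"
    let ?K = "reach E (V - B n) u"
    have KV: "?K \<subseteq> V"
    proof
      fix w assume "w \<in> ?K"
      then have "(u, w) \<in> (conn E (V - B n))\<^sup>*" unfolding reach_def by simp
      then show "w \<in> V" using u by (induction rule: rtrancl_induct) (auto simp: conn_def)
    qed
    obtain x where x: "x \<in> N" "u \<in> B x" using bag_cover u by auto
    have xn: "x \<noteq> n" using x u by auto
    show "2 * card (W \<inter> ?K) \<le> card W"
    proof (cases "x \<in> sub n")
      case True
      then obtain c where c: "c \<in> N" "c \<noteq> \<rho>" "p c = n" "x \<in> sub c" using sub_child xn by blast
      note cl = sub_child_closed[OF c(1,2,3)]
      have "nodes u \<subseteq> sub c" using nodes_closed[OF cl, where v=u and x=x] u x c(4) unfolding nodes_def by auto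
      then have "nodes w \<subseteq> sub c" if "w \<in> ?K" for w using reach_closed[OF cl, where u=u and w=w] u that by auto
      then have "?K \<subseteq> Y c" using KV bag_cover unfolding Y_def nodes_def by fastforce
      moreover have "\<not> heavy c"
      proof
        assume "heavy c"
        then have "dep c \<le> dep n" by (rule nmax)
        moreover have "dep n + 1 = dep c" using pP[OF c(1,2)] c(3) by simp
        ultimately show False by simp
      qed
      then have "2 * card (W \<inter> Y c) \<le> card W" using c(1) unfolding heavy_def by simp
      moreover have "card (W \<inter> ?K) \<le> card (W \<inter> Y c)" using calculation(1) finW
        by (intro card_mono) auto
      ultimately show ?thesis by simp
    next
      case False
      have cl: "(a, b) \<in> F \<Longrightarrow> a \<in> N - sub n \<Longrightarrow> b \<noteq> n \<Longrightarrow> b \<in> N - sub n" for a b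
        using nsub_closed[of a b n] FN by auto
      have "nodes u \<subseteq> N - sub n" using nodes_closed[OF cl, where v=u and x=x] u x False unfolding nodes_def by auto
      then have "nodes w \<subseteq> N - sub n" if "w \<in> ?K" for w using reach_closed[OF cl, where u=u and w=w] u that by auto
      then have "?K \<inter> Y n = {}"
      proof -
        assume h: "\<And>w. w \<in> ?K \<Longrightarrow> nodes w \<subseteq> N - sub n"
        show ?thesis
        proof (rule ccontr)
          assume "?K \<inter> Y n \<noteq> {}"
          then obtain w y where w: "w \<in> ?K" "y \<in> sub n" "w \<in> B y" unfolding Y_def by blast
          then have "y \<in> nodes w" unfolding nodes_def sub_def by auto
          then show False using h[OF w(1)] w(2) by auto
        qed
      qed
      then have "W \<inter> ?K \<subseteq> W - (W \<inter> Y n)" by auto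
      then have "card (W \<inter> ?K) \<le> card (W - (W \<inter> Y n))" using finW by (intro card_mono) auto
      also have "\<dots> = card W - card (W \<inter> Y n)" using finW by (simp add: card_Diff_subset)
      finally show ?thesis using n unfolding heavy_def by linarith
    qed
  qed
qed

end



lemma reach_refl: "u \<in> reach H A u" unfolding reach_def by simp

lemma reach_subset: "u \<in> A \<Longrightarrow> reach H A u \<subseteq> A"
proof
  fix w assume "u \<in> A" "w \<in> reach H A u"
  then have "(u, w) \<in> (conn H A)\<^sup>*" "u \<in> A" unfolding reach_def by auto
  then show "w \<in> A" by (induction rule: rtrancl_induct) (auto simp: conn_def)
qed

lemma conn_mono: "A \<subseteq> B \<Longrightarrow> conn H A \<subseteq> conn H B" unfolding conn_def by auto

lemma reach_mono: "A \<subseteq> B \<Longrightarrow> reach H A u \<subseteq> reach H B u"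
  unfolding reach_def using rtrancl_mono[OF conn_mono] by blast

lemma sym_conn: "sym H \<Longrightarrow> sym (conn H A)"
  unfolding sym_def conn_def by auto

lemma reach_eq:
  assumes "sym H" "v \<in> reach H A u" shows "reach H A v = reach H A u"
proof -
  have s: "sym ((conn H A)\<^sup>*)" using sym_conn[OF assms(1)] by (rule sym_rtrancl)
  have uv: "(u, v) \<in> (conn H A)\<^sup>*" using assms(2) unfolding reach_def by simp
  then have vu: "(v, u) \<in> (conn H A)\<^sup>*" using s by (auto dest: symD)
  show ?thesis unfolding reach_def using uv vu by (auto intro: rtrancl_trans)
qed

lemma reach_restrict:
  assumes "A \<subseteq> B" shows "reach H A u \<subseteq> reach H (A \<inter> reach H B u) u"
proof
  fix w assume "w \<in> reach H A u"
  then have "(u, w) \<in> (conn H A)\<^sup>*" unfolding reach_def by simp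
  then have "(u, w) \<in> (conn H (A \<inter> reach H B u))\<^sup>* \<and> (u, w) \<in> (conn H B)\<^sup>*"
  proof (induction rule: rtrancl_induct)
    case base then show ?case by simp
  next
    case (step y z)
    have yz: "(y, z) \<in> H" "y \<in> A" "z \<in> A" using step.hyps(2) unfolding conn_def by auto
    have uz: "(u, z) \<in> (conn H B)\<^sup>*" using step.IH yz assms
      by (meson conn_mono rtrancl.rtrancl_into_rtrancl step.hyps(2) subsetD)
    have uy: "(u, y) \<in> (conn H B)\<^sup>*" using step.IH by simp
    have "(y, z) \<in> conn H (A \<inter> reach H B u)" using yz uy uz unfolding conn_def reach_def by auto
    then show ?case using step.IH uz by (meson rtrancl.rtrancl_into_rtrancl)
  qed
  then show "w \<in> reach H (A \<inter> reach H B u) u" unfolding reach_def by simp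
qed

lemma reach_disj:
  assumes "sym H" "reach H A u \<noteq> reach H A v" shows "reach H A u \<inter> reach H A v = {}"
  using reach_eq[OF assms(1)] assms(2) by blast



fun sepf :: "nat \<Rightarrow> nat \<Rightarrow> nat" where
  "sepf s 0 = 0"
| "sepf s (Suc q) = s + 2 ^ Suc q * sepf s q"

lemma sep_iter:
  fixes H :: "('a \<times> 'a) set"
  assumes finV: "finite V" and symH: "sym H"
  and sep1: "\<And>U W. U \<subseteq> V \<Longrightarrow> W \<subseteq> U \<Longrightarrow>
      \<exists>X \<subseteq> U. card X \<le> s \<and> (\<forall>u\<in>U - X. 2 * card (W \<inter> reach H (U - X) u) \<le> card W)"
  shows "U \<subseteq> V \<Longrightarrow> W \<subseteq> U \<Longrightarrow>
      \<exists>X \<subseteq> U. card X \<le> sepf s q \<and> (\<forall>u\<in>U - X. 2 ^ q * card (W \<inter> reach H (U - X) u) \<le> card W)"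
proof (induction q arbitrary: U W)
  case 0
  show ?case
  proof (intro exI[of _ "{}"] conjI ballI)
    fix u assume "u \<in> U - {}"
    have "finite W" using finite_subset[OF subset_trans[OF 0(2) 0(1)] finV] .
    then show "2 ^ 0 * card (W \<inter> reach H (U - {}) u) \<le> card W" by (simp add: card_mono)
  qed auto
next
  case (Suc q)
  have finU: "finite U" using finite_subset[OF Suc.prems(1) finV] .
  have finW: "finite W" using finite_subset[OF Suc.prems(2) finU] .
  obtain X0 where X0: "X0 \<subseteq> U" "card X0 \<le> s"
    "\<And>u. u \<in> U - X0 \<Longrightarrow> 2 * card (W \<inter> reach H (U - X0) u) \<le> card W"
    using sep1[OF Suc.prems] by blast
  define R where "R u = reach H (U - X0) u" for u
  define C where "C = {R u | u. u \<in> U - X0 \<and> card W < 2 ^ Suc q * card (W \<inter> R u)}"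
  have CU: "K \<subseteq> U" if KC: "K \<in> C" for K
  proof -
    obtain u where "K = R u" "u \<in> U - X0" using KC unfolding C_def by blast
    then have "K \<subseteq> U - X0" unfolding R_def using reach_subset by metis
    then show ?thesis by blast
  qed
  have "C \<subseteq> Pow U" using CU by blast
  then have finC: "finite C" using finite_subset finite_Pow_iff[THEN iffD2, OF finU] by blast
  have disj: "K1 \<inter> K2 = {}" if KK: "K1 \<in> C" "K2 \<in> C" "K1 \<noteq> K2" for K1 K2
  proof -
    obtain u1 where "K1 = R u1" using KK(1) unfolding C_def by blast
    moreover obtain u2 where "K2 = R u2" using KK(2) unfolding C_def by blast
    ultimately show ?thesis using KK(3) reach_disj[OF symH] unfolding R_def by metis
  qed
  have heavyC: "card W + 1 \<le> 2 ^ Suc q * card (W \<inter> K)" if KC: "K \<in> C" for K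
  proof -
    obtain u where "K = R u" "card W < 2 ^ Suc q * card (W \<inter> R u)" using KC unfolding C_def by blast
    then show ?thesis by simp
  qed
  have "(\<Sum>K\<in>C. card (W \<inter> K)) = card (\<Union>K\<in>C. W \<inter> K)"
    by (rule card_UN_disjoint[symmetric]) (use finC finW disj in auto)
  also have "\<dots> \<le> card W" using finW by (intro card_mono) auto
  finally have sumle: "(\<Sum>K\<in>C. card (W \<inter> K)) \<le> card W" .
  have "card C * (card W + 1) \<le> (\<Sum>K\<in>C. 2 ^ Suc q * card (W \<inter> K))"
    using sum_bounded_below[of C "card W + 1" "\<lambda>K. 2 ^ Suc q * card (W \<inter> K)"] heavyC by simp
  also have "\<dots> = 2 ^ Suc q * (\<Sum>K\<in>C. card (W \<inter> K))" by (simp add: sum_distrib_left)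
  also have "\<dots> \<le> 2 ^ Suc q * card W" using sumle by simp
  also have "\<dots> \<le> 2 ^ Suc q * (card W + 1)" by simp
  finally have "card C * (card W + 1) \<le> 2 ^ Suc q * (card W + 1)" .
  then have cardC: "card C \<le> 2 ^ Suc q" by (subst (asm) mult_le_cancel2) simp
  have IH: "\<exists>XK \<subseteq> K. card XK \<le> sepf s q \<and>
      (\<forall>u\<in>K - XK. 2 ^ q * card ((W \<inter> K) \<inter> reach H (K - XK) u) \<le> card (W \<inter> K))" if "K \<in> C" for K
    using Suc.IH[of K "W \<inter> K"] CU[OF that] Suc.prems by blast
  define Xf where "Xf K = (SOME XK. XK \<subseteq> K \<and> card XK \<le> sepf s q \<and>
      (\<forall>u\<in>K - XK. 2 ^ q * card ((W \<inter> K) \<inter> reach H (K - XK) u) \<le> card (W \<inter> K)))" for K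
  have Xf: "Xf K \<subseteq> K \<and> card (Xf K) \<le> sepf s q \<and>
      (\<forall>u\<in>K - Xf K. 2 ^ q * card ((W \<inter> K) \<inter> reach H (K - Xf K) u) \<le> card (W \<inter> K))" if "K \<in> C" for K
    unfolding Xf_def using someI_ex[OF IH[OF that]] by blast
  define X where "X = X0 \<union> (\<Union>K\<in>C. Xf K)"
  have XU: "X \<subseteq> U" unfolding X_def using X0(1) Xf CU by blast
  have "card X \<le> card X0 + card (\<Union>K\<in>C. Xf K)" unfolding X_def by (rule card_Un_le)
  also have "card (\<Union>K\<in>C. Xf K) \<le> (\<Sum>K\<in>C. card (Xf K))" by (rule card_UN_le[OF finC])
  also have "(\<Sum>K\<in>C. card (Xf K)) \<le> card C * sepf s q"
    using sum_bounded_above[of C "\<lambda>K. card (Xf K)" "sepf s q"] Xf by simp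
  also have "card C * sepf s q \<le> 2 ^ Suc q * sepf s q" using cardC by simp
  finally have cardX: "card X \<le> sepf s (Suc q)" using X0(2) by simp
  show ?case
  proof (intro exI[of _ X] conjI ballI XU cardX)
    fix u assume u: "u \<in> U - X"
    then have u0: "u \<in> U - X0" unfolding X_def by auto
    have sub0: "reach H (U - X) u \<subseteq> R u" unfolding R_def by (rule reach_mono) (auto simp: X_def)
    show "2 ^ Suc q * card (W \<inter> reach H (U - X) u) \<le> card W"
    proof (cases "card W < 2 ^ Suc q * card (W \<inter> R u)")
      case False
      have "card (W \<inter> reach H (U - X) u) \<le> card (W \<inter> R u)" using sub0 finW
        by (intro card_mono) auto
      then show ?thesis using False
        by (meson le_trans mult_le_mono2 not_le_imp_less not_less)
    next
      case True
      then have KC: "R u \<in> C" unfolding C_def using u0 by blast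
      let ?K = "R u"
      have uK: "u \<in> ?K" unfolding R_def by (rule reach_refl)
      have uX: "u \<notin> Xf ?K" using u KC unfolding X_def by blast
      have "reach H (U - X) u \<subseteq> reach H ((U - X) \<inter> ?K) u"
        unfolding R_def by (rule reach_restrict) (auto simp: X_def)
      also have "\<dots> \<subseteq> reach H (?K - Xf ?K) u" using KC by (intro reach_mono) (auto simp: X_def)
      finally have ss: "reach H (U - X) u \<subseteq> reach H (?K - Xf ?K) u" .
      have "reach H (U - X) u \<subseteq> ?K" using sub0 .
      then have "W \<inter> reach H (U - X) u \<subseteq> (W \<inter> ?K) \<inter> reach H (?K - Xf ?K) u" using ss by auto
      then have c1: "card (W \<inter> reach H (U - X) u) \<le> card ((W \<inter> ?K) \<inter> reach H (?K - Xf ?K) u)"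
        using finW by (intro card_mono) auto
      have c2: "2 ^ q * card ((W \<inter> ?K) \<inter> reach H (?K - Xf ?K) u) \<le> card (W \<inter> ?K)"
        using Xf[OF KC] uK uX by blast
      have c3: "2 * card (W \<inter> ?K) \<le> card W" using X0(3)[OF u0] unfolding R_def .
      have "2 ^ Suc q * card (W \<inter> reach H (U - X) u) \<le> 2 * (2 ^ q * card ((W \<inter> ?K) \<inter> reach H (?K - Xf ?K) u))"
        using c1 by simp
      also have "\<dots> \<le> 2 * card (W \<inter> ?K)" using c2 by simp
      also have "\<dots> \<le> card W" using c3 .
      finally show ?thesis .
    qed
  qed
qed



definition mrel :: "('a \<times> 'a) set \<Rightarrow> 'a set \<Rightarrow> ('a \<Rightarrow> bool) \<Rightarrow> ('a \<times> 'a) set" where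
  "mrel H U c = {(x, y). (x, y) \<in> H \<and> x \<in> U \<and> y \<in> U \<and> c x = c y}"

definition mreach :: "('a \<times> 'a) set \<Rightarrow> 'a set \<Rightarrow> ('a \<Rightarrow> bool) \<Rightarrow> 'a \<Rightarrow> 'a set" where
  "mreach H U c v = {w. (v, w) \<in> (mrel H U c)\<^sup>*}"

lemma mreach_sub: "v \<in> U \<Longrightarrow> mreach H U c v \<subseteq> U"
proof
  fix w assume "v \<in> U" "w \<in> mreach H U c v"
  then have "(v, w) \<in> (mrel H U c)\<^sup>*" "v \<in> U" unfolding mreach_def by auto
  then show "w \<in> U" by (induction rule: rtrancl_induct) (auto simp: mrel_def)
qed

lemma nbr_card:
  assumes fin: "finite A" and deg: "\<And>x. card {y. (x, y) \<in> H} \<le> D"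
  and finH: "\<And>x. finite {y. (x, y) \<in> H}"
  shows "card {w. \<exists>r\<in>A. (r, w) \<in> H} \<le> D * card A"
proof -
  have "{w. \<exists>r\<in>A. (r, w) \<in> H} = (\<Union>r\<in>A. {w. (r, w) \<in> H})" by auto
  then have "card {w. \<exists>r\<in>A. (r, w) \<in> H} \<le> (\<Sum>r\<in>A. card {w. (r, w) \<in> H})"
    using card_UN_le[OF fin, of "\<lambda>r. {w. (r, w) \<in> H}"] by simp
  also have "\<dots> \<le> card A * D" using sum_bounded_above[of A "\<lambda>r. card {w. (r, w) \<in> H}" D] deg by simp
  finally show ?thesis by (simp add: mult.commute)
qed

lemma clustered:
  fixes H :: "('a \<times> 'a) set"
  assumes finV: "finite V" and HV: "H \<subseteq> V \<times> V" and symH: "sym H"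
  and deg: "\<And>x. card {y. (x, y) \<in> H} \<le> D"
  and sepq: "\<And>U W. U \<subseteq> V \<Longrightarrow> W \<subseteq> U \<Longrightarrow>
      \<exists>X \<subseteq> U. card X \<le> s \<and> (\<forall>u\<in>U - X. Q * card (W \<inter> reach H (U - X) u) \<le> card W)"
  and DQ: "2 * D \<le> Q" and Da: "2 * D * s \<le> a" and a1: "1 \<le> a"
  shows "U \<subseteq> V \<Longrightarrow> S \<subseteq> U \<Longrightarrow> card S \<le> a \<Longrightarrow>
     \<exists>c. (\<forall>v\<in>S. c v = b) \<and> (\<forall>v\<in>U. card (mreach H U c v) \<le> a + s)"
proof (induction "card U" arbitrary: U S b rule: less_induct)
  case less
  have finU: "finite U" using finite_subset[OF less.prems(1) finV] .
  have finH: "finite {y. (x, y) \<in> H}" for x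
  proof -
    have "{y. (x, y) \<in> H} \<subseteq> V" using HV by blast
    then show ?thesis using finite_subset finV by blast
  qed
  show ?case
  proof (cases "U = {}")
    case True then show ?thesis by auto
  next
    case False
    obtain S' where S': "S \<subseteq> S'" "S' \<subseteq> U" "card S' \<le> a" "S' \<noteq> {}"
    proof (cases "S = {}")
      case True
      obtain u where "u \<in> U" using False by blast
      then show ?thesis using that[of "{u}"] True a1 by auto
    next
      case False then show ?thesis using that[of S] less.prems by auto
    qed
    obtain X where X: "X \<subseteq> U" "card X \<le> s"
      "\<And>u. u \<in> U - X \<Longrightarrow> Q * card (S' \<inter> reach H (U - X) u) \<le> card S'"
      using sepq[OF less.prems(1) S'(2)] by blast
    define R where "R = S' \<union> X"
    have RU: "R \<subseteq> U" using S' X unfolding R_def by auto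
    have finR: "finite R" using finite_subset[OF RU finU] .
    have Rne: "R \<noteq> {}" using S' unfolding R_def by auto
    have cardR: "card R \<le> a + s" unfolding R_def using card_Un_le[of S' X] S'(3) X(2) by simp
    define comp where "comp v = reach H (U - R) v" for v
    define bd where "bd K = {w \<in> K. \<exists>r\<in>R. (r, w) \<in> H}" for K
    have compU: "comp v \<subseteq> U - R" if "v \<in> U - R" for v
      unfolding comp_def using reach_subset[OF that] .
    have comp_eq: "comp w = comp v" if "w \<in> comp v" for v w
      unfolding comp_def using reach_eq[OF symH] that unfolding comp_def by metis
    have comp_lt: "card (comp v) < card U" if "v \<in> U - R" for v
    proof -
      obtain r where "r \<in> R" using Rne by blast
      then have "comp v \<subset> U" using compU[OF that] RU by blast
      then show ?thesis by (rule psubset_card_mono[OF finU])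
    qed
    have bd_card: "card (bd (comp v)) \<le> a" if v: "v \<in> U - R" for v
    proof -
      let ?K' = "reach H (U - X) v"
      have KK': "comp v \<subseteq> ?K'" unfolding comp_def by (rule reach_mono) (auto simp: R_def)
      have vX: "v \<in> U - X" using v unfolding R_def by auto
      have "bd (comp v) \<subseteq> {w. \<exists>r\<in>X \<union> (S' \<inter> ?K'). (r, w) \<in> H}"
      proof
        fix w assume "w \<in> bd (comp v)"
        then obtain r where w: "w \<in> comp v" "r \<in> R" "(r, w) \<in> H" unfolding bd_def by blast
        show "w \<in> {w. \<exists>r\<in>X \<union> (S' \<inter> ?K'). (r, w) \<in> H}"
        proof (cases "r \<in> X")
          case True then show ?thesis using w by blast
        next
          case False
          then have rS: "r \<in> S'" "r \<in> U - X" using w(2) RU unfolding R_def by auto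
          have wK: "w \<in> ?K'" using w(1) KK' by blast
          have wUX: "w \<in> U - X" using w(1) compU[OF v] unfolding R_def by blast
          have "(w, r) \<in> conn H (U - X)" using w(3) symH rS wUX unfolding conn_def by (auto dest: symD)
          then have "r \<in> reach H (U - X) w" unfolding reach_def by auto
          then have "r \<in> ?K'" using reach_eq[OF symH wK] by simp
          then show ?thesis using w(3) rS by blast
        qed
      qed
      moreover have "finite (X \<union> (S' \<inter> ?K'))" using finite_subset[OF X(1) finU] finite_subset[OF S'(2) finU] by auto
      moreover have "{w. \<exists>r\<in>X \<union> (S' \<inter> ?K'). (r, w) \<in> H} \<subseteq> V" using HV by blast
      then have "finite {w. \<exists>r\<in>X \<union> (S' \<inter> ?K'). (r, w) \<in> H}"
        using finite_subset finV by blast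
      ultimately have "card (bd (comp v)) \<le> D * card (X \<union> (S' \<inter> ?K'))"
        using nbr_card[of "X \<union> (S' \<inter> ?K')" H D, OF _ deg finH] card_mono le_trans by blast
      also have "\<dots> \<le> D * (card X + card (S' \<inter> ?K'))" using card_Un_le[of X "S' \<inter> ?K'"] by (rule mult_le_mono2)
      also have "\<dots> \<le> D * s + D * card (S' \<inter> ?K')" using X(2) by (simp add: add_mult_distrib2)
      finally have b1: "card (bd (comp v)) \<le> D * s + D * card (S' \<inter> ?K')" .
      have "Q * card (S' \<inter> ?K') \<le> a" using X(3)[OF vX] S'(3) by simp
      then have "2 * D * card (S' \<inter> ?K') \<le> a" using DQ
        by (meson le_trans mult_le_mono1)
      then show ?thesis using b1 Da by simp
    qed
    define P where "P K c' \<longleftrightarrow> (\<forall>w\<in>bd K. c' w = (\<not> b)) \<and> (\<forall>w\<in>K. card (mreach H K c' w) \<le> a + s)" for K c'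
    have exP: "\<exists>c'. P K c'" if v: "v \<in> U - R" "K = comp v" for v K
    proof -
      have "comp v \<subseteq> V" using compU[OF v(1)] less.prems(1) by blast
      moreover have "bd (comp v) \<subseteq> comp v" unfolding bd_def by blast
      ultimately show ?thesis using less.hyps[OF comp_lt[OF v(1)], of "bd (comp v)" "\<not> b"] bd_card[OF v(1)] v(2)
        unfolding P_def by blast
    qed
    define Cf where "Cf K = (SOME c'. P K c')" for K
    have Cf: "P (comp v) (Cf (comp v))" if "v \<in> U - R" for v
      unfolding Cf_def by (rule someI_ex[OF exP[OF that refl]])
    define c where "c w = (if w \<in> R then b else Cf (comp w) w)" for w
    have c_bd: "c w = (\<not> b)" if "w \<in> U - R" "r \<in> R" "(r, w) \<in> H" for w r
    proof -
      have "w \<in> comp w" unfolding comp_def by (rule reach_refl)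
      then have "w \<in> bd (comp w)" using that unfolding bd_def by blast
      then show ?thesis using Cf[OF that(1)] that(1) unfolding P_def c_def by simp
    qed
    show ?thesis
    proof (intro exI[of _ c] conjI ballI)
      fix v assume "v \<in> S"
      then show "c v = b" using S'(1) unfolding c_def R_def by auto
    next
      fix v assume vU: "v \<in> U"
      show "card (mreach H U c v) \<le> a + s"
      proof (cases "v \<in> R")
        case True
        have "mreach H U c v \<subseteq> R"
        proof
          fix w assume "w \<in> mreach H U c v"
          then have "(v, w) \<in> (mrel H U c)\<^sup>*" unfolding mreach_def by simp
          then show "w \<in> R"
          proof (induction rule: rtrancl_induct)
            case base then show ?case using True .
          next
            case (step y z)
            have yz: "(y, z) \<in> H" "z \<in> U" "c y = c z" using step.hyps(2) unfolding mrel_def by auto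
            have cy: "c y = b" using step.IH unfolding c_def by simp
            show ?case
            proof (rule ccontr)
              assume "z \<notin> R"
              then have "c z = (\<not> b)" using c_bd[of z y] yz step.IH by blast
              then show False using cy yz(3) by simp
            qed
          qed
        qed
        then have "card (mreach H U c v) \<le> card R" using finR by (rule card_mono[rotated])
        then show ?thesis using cardR by simp
      next
        case False
        then have vUR: "v \<in> U - R" using vU by blast
        let ?K = "comp v"
        have sub: "mreach H U c v \<subseteq> mreach H ?K (Cf ?K) v"
        proof
          fix w assume "w \<in> mreach H U c v"
          then have "(v, w) \<in> (mrel H U c)\<^sup>*" unfolding mreach_def by simp
          then have "(v, w) \<in> (mrel H ?K (Cf ?K))\<^sup>* \<and> w \<in> ?K"
          proof (induction rule: rtrancl_induct)
            case base then show ?case unfolding comp_def by (simp add: reach_refl)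
          next
            case (step y z)
            have yz: "(y, z) \<in> H" "z \<in> U" "c y = c z" using step.hyps(2) unfolding mrel_def by auto
            have yK: "y \<in> ?K" using step.IH by simp
            have yUR: "y \<in> U - R" using compU[OF vUR] yK by blast
            have compy: "comp y = ?K" using comp_eq[OF yK] .
            have zR: "z \<notin> R"
            proof
              assume zR: "z \<in> R"
              have "(z, y) \<in> H" using yz(1) symH by (auto dest: symD)
              then have "c y = (\<not> b)" using c_bd[OF yUR zR] by simp
              moreover have "c z = b" using zR unfolding c_def by simp
              ultimately show False using yz(3) by simp
            qed
            have "(y, z) \<in> conn H (U - R)" using yz yUR zR unfolding conn_def by auto
            moreover have "(v, y) \<in> (conn H (U - R))\<^sup>*" using yK unfolding comp_def reach_def by simp
            ultimately have "(v, z) \<in> (conn H (U - R))\<^sup>*" by (rule rtrancl.rtrancl_into_rtrancl[rotated])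
            then have zK: "z \<in> ?K" unfolding comp_def reach_def by simp
            have compz: "comp z = ?K" using comp_eq[OF zK] .
            have "Cf ?K y = Cf ?K z" using yz(3) yUR zR compy compz unfolding c_def by simp
            then have "(y, z) \<in> mrel H ?K (Cf ?K)" using yz yK zK unfolding mrel_def by simp
            then show ?case using step.IH zK by (meson rtrancl.rtrancl_into_rtrancl)
          qed
          then show "w \<in> mreach H ?K (Cf ?K) v" unfolding mreach_def by simp
        qed
        have vK: "v \<in> ?K" unfolding comp_def by (rule reach_refl)
        have finK: "finite ?K" using finite_subset[OF compU[OF vUR]] finU by blast
        have "mreach H ?K (Cf ?K) v \<subseteq> ?K" by (rule mreach_sub[OF vK])
        then have "card (mreach H U c v) \<le> card (mreach H ?K (Cf ?K) v)"
          using sub finK by (meson card_mono finite_subset)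
        also have "\<dots> \<le> a + s" using Cf[OF vUR] vK unfolding P_def by blast
        finally show ?thesis .
      qed
    qed
  qed
qed



lemma walk_conn: "is_walk E xs \<Longrightarrow> set xs \<subseteq> A \<Longrightarrow> (hd xs, last xs) \<in> (conn E A)\<^sup>*"
proof (induction xs)
  case Nil then show ?case by simp
next
  case (Cons x xs)
  show ?case
  proof (cases xs)
    case Nil then show ?thesis by simp
  next
    case (Cons z zs)
    have "(x, z) \<in> conn E A" using Cons.prems \<open>xs = z # zs\<close> unfolding conn_def by auto
    moreover have "(z, last xs) \<in> (conn E A)\<^sup>*" using Cons.IH Cons.prems \<open>xs = z # zs\<close> by auto
    ultimately show ?thesis using \<open>xs = z # zs\<close> by (auto intro: converse_rtrancl_into_rtrancl)
  qed
qed

definition ballset :: "('a \<times> 'a) set \<Rightarrow> 'a \<Rightarrow> nat \<Rightarrow> 'a set" where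
  "ballset E x n = {y. \<exists>xs. is_walk E xs \<and> hd xs = x \<and> last xs = y \<and> length xs \<le> Suc n}"

lemma ballset_card:
  assumes EV: "E \<subseteq> V \<times> V" and finV: "finite V" and deg: "\<And>v. card {u. (v, u) \<in> E} \<le> D"
  shows "finite (ballset E x n) \<and> card (ballset E x n) \<le> (D + 1) ^ n"
proof (induction n)
  case 0
  have "ballset E x 0 = {x}" unfolding ballset_def
  proof (intro set_eqI iffI)
    fix y assume "y \<in> {y. \<exists>xs. is_walk E xs \<and> hd xs = x \<and> last xs = y \<and> length xs \<le> Suc 0}"
    then obtain xs where "is_walk E xs" "hd xs = x" "last xs = y" "length xs \<le> Suc 0" by blast
    then show "y \<in> {x}" by (cases xs) auto
  next
    fix y assume "y \<in> {x}"
    then show "y \<in> {y. \<exists>xs. is_walk E xs \<and> hd xs = x \<and> last xs = y \<and> length xs \<le> Suc 0}"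
      by (intro CollectI exI[of _ "[x]"]) auto
  qed
  then show ?case by simp
next
  case (Suc n)
  let ?B = "ballset E x n"
  let ?N = "{w. \<exists>r\<in>?B. (r, w) \<in> E}"
  have sub: "ballset E x (Suc n) \<subseteq> ?B \<union> ?N"
  proof
    fix y assume "y \<in> ballset E x (Suc n)"
    then obtain xs where xs: "is_walk E xs" "hd xs = x" "last xs = y" "length xs \<le> Suc (Suc n)"
      unfolding ballset_def by blast
    show "y \<in> ?B \<union> ?N"
    proof (cases "length xs \<le> Suc n")
      case True then show ?thesis using xs unfolding ballset_def by blast
    next
      case False
      then have len: "length xs = Suc (Suc n)" using xs(4) by simp
      define ys where "ys = take (Suc n) xs"
      have ysw: "is_walk E ys" unfolding ys_def using is_walk_take[OF xs(1)] by simp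
      have ysne: "ys \<noteq> []" using ysw by auto
      have "hd ys = x" using xs len unfolding ys_def by (cases xs) auto
      moreover have "length ys \<le> Suc n" unfolding ys_def by simp
      ultimately have "last ys \<in> ?B" using ysw unfolding ballset_def by blast
      moreover have "last ys = xs ! n" using len ysne unfolding ys_def by (simp add: last_conv_nth)
      moreover have "(xs ! n, xs ! Suc n) \<in> E" using is_walk_nth_E[OF xs(1), of n] len by simp
      moreover have "xs ! Suc n = y" using xs(3) len last_conv_nth[of xs] by (cases xs) auto
      ultimately show ?thesis by auto
    qed
  qed
  have finN: "finite ?N" using finite_subset[of ?N V] EV finV by blast
  have fin: "finite (?B \<union> ?N)" using Suc.IH finN by simp
  have finE: "finite {y. (x, y) \<in> E}" for x using finite_subset[of "{y. (x, y) \<in> E}" V] EV finV by blast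
  have "card (?B \<union> ?N) \<le> card ?B + card ?N" by (rule card_Un_le)
  also have "card ?N \<le> D * card ?B" using nbr_card[of ?B E D] Suc.IH deg finE by blast
  finally have "card (?B \<union> ?N) \<le> (D + 1) * card ?B" by simp
  also have "\<dots> \<le> (D + 1) * (D + 1) ^ n" using Suc.IH by (intro mult_le_mono2) simp
  finally have "card (?B \<union> ?N) \<le> (D + 1) ^ Suc n" by simp
  then show ?case using card_mono[OF fin sub] finite_subset[OF sub fin] by simp
qed

lemma gdist_sym:
  assumes "sym E" "gdist E x y \<le> ereal r" shows "gdist E y x \<le> ereal r"
proof -
  obtain xs where xs: "is_walk E xs" "hd xs = x" "last xs = y" "real (length xs - 1) \<le> r"
    using assms(2) unfolding gdist_le_iff by blast
  have "xs \<noteq> []" using xs by auto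
  then have "is_walk E (rev xs)" "hd (rev xs) = y" "last (rev xs) = x" "real (length (rev xs) - 1) \<le> r"
    using is_walk_rev[OF assms(1) xs(1)] xs by (auto simp: hd_rev last_rev)
  then show ?thesis unfolding gdist_le_iff by blast
qed

lemma walk_le_floor:
  assumes "real (length xs - 1) \<le> r" shows "length xs \<le> Suc (nat \<lfloor>r\<rfloor>)"
proof -
  have "int (length xs - 1) \<le> \<lfloor>r\<rfloor>" using assms by linarith
  then show ?thesis by linarith
qed

lemma relpow_walk:
  assumes "\<And>x y. (x, y) \<in> R \<Longrightarrow> \<exists>xs. is_walk E xs \<and> hd xs = x \<and> last xs = y \<and> length xs \<le> Suc m"
  shows "(x, y) \<in> R ^^ n \<Longrightarrow> \<exists>xs. is_walk E xs \<and> hd xs = x \<and> last xs = y \<and> length xs \<le> Suc (n * m)"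
proof (induction n arbitrary: y)
  case 0 then show ?case by (intro exI[of _ "[x]"]) auto
next
  case (Suc n)
  then obtain z where z: "(x, z) \<in> R ^^ n" "(z, y) \<in> R" by auto
  obtain xs where xs: "is_walk E xs" "hd xs = x" "last xs = z" "length xs \<le> Suc (n * m)" using Suc.IH z(1) by blast
  obtain ys where ys: "is_walk E ys" "hd ys = z" "last ys = y" "length ys \<le> Suc m" using assms z(2) by blast
  have w: "is_walk E (xs @ tl ys)" using is_walk_join[OF xs(1) ys(1)] xs ys by simp
  have xsne: "xs \<noteq> []" "ys \<noteq> []" using xs ys by auto
  have "hd (xs @ tl ys) = x" using xs xsne by simp
  moreover have "last (xs @ tl ys) = y"
  proof (cases "tl ys")
    case Nil then show ?thesis using xs ys xsne by (cases ys) auto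
  next
    case (Cons a l) then show ?thesis using ys xsne by (metis last_appendR last_tl list.distinct(1))
  qed
  moreover have "length (xs @ tl ys) \<le> Suc (Suc n * m)" using xs(4) ys(4) by simp
  ultimately show ?case using w by blast
qed



lemma tw_decomp:
  assumes fg: "fin_graph V E" and tw: "treewidth V E \<le> t"
  shows "\<exists>(N::nat set) F B. tree_decomposition V E N F B \<and> (\<forall>n\<in>N. card (B n) \<le> nat (t + 1))"
proof -
  define P where "P k \<longleftrightarrow> (\<exists>(N::nat set) F B. tree_decomposition V E N F B \<and> td_width N B = k)" for k
  have EV: "E \<subseteq> V \<times> V" using fg unfolding fin_graph_def by simp
  have t0: "is_tree {0::nat} {}"
    unfolding is_tree_def fin_graph_def connected_in_def by (auto simp: sym_def intro!: exI[of _ "[0::nat]"])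
  have c0: "connected_in {} {0::nat}"
    unfolding connected_in_def by (auto intro!: exI[of _ "[0::nat]"])
  have triv: "tree_decomposition V E {0} {} (\<lambda>_. V)"
    unfolding tree_decomposition_def using t0 c0 EV by (auto simp: conj_commute)
  have ge: "-1 \<le> k" if "P k" for k
    using that unfolding P_def td_width_def by auto
  have "P (td_width {0} (\<lambda>_. V))" unfolding P_def using triv by blast
  then obtain k0 where "P k0" by blast
  define m where "m = (LEAST n::nat. P (int n - 1))"
  have "P (int (nat (k0 + 1)) - 1)" using \<open>P k0\<close> ge[OF \<open>P k0\<close>] by simp
  then have Pm: "P (int m - 1)" unfolding m_def by (rule LeastI)
  have "treewidth V E = int m - 1"
    unfolding treewidth_def P_def[symmetric]
  proof (rule Least_equality)
    show "P (int m - 1)" by (rule Pm)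
    fix y assume "P y"
    then have "P (int (nat (y + 1)) - 1)" using ge[OF \<open>P y\<close>] by simp
    then have "m \<le> nat (y + 1)" unfolding m_def by (rule Least_le)
    then show "int m - 1 \<le> y" using ge[OF \<open>P y\<close>] by linarith
  qed
  then have "P (treewidth V E)" using Pm by simp
  then obtain N F B where td: "tree_decomposition V E (N::nat set) F B" and w: "td_width N B = treewidth V E"
    unfolding P_def by blast
  have finN: "finite N" using td unfolding tree_decomposition_def is_tree_def fin_graph_def by simp
  have "card (B n) \<le> nat (t + 1)" if "n \<in> N" for n
  proof -
    have "card (B n) \<le> Max ((\<lambda>n. card (B n)) ` N)" using finN that by (intro Max_ge) auto
    moreover have "int (Max ((\<lambda>n. card (B n)) ` N)) - 1 \<le> t" using w tw unfolding td_width_def by simp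
    ultimately show ?thesis by linarith
  qed
  then show ?thesis using td by blast
qed

lemma deg_bound:
  assumes fg: "fin_graph V E" and md: "int (max_degree V E) \<le> \<Delta>"
  shows "card {u. (v, u) \<in> E} \<le> nat \<Delta>"
proof (cases "v \<in> V")
  case True
  have finV: "finite V" using fg unfolding fin_graph_def by simp
  have "card {u. (v, u) \<in> E} \<le> max_degree V E" unfolding max_degree_def
    using finV True by (intro Max_ge) auto
  then show ?thesis using md by linarith
next
  case False
  then have "{u. (v, u) \<in> E} = {}" using fg unfolding fin_graph_def by auto
  then show ?thesis by simp
qed



definition Rn :: "real \<Rightarrow> nat" where "Rn r = nat \<lfloor>r\<rfloor>"
definition DH :: "nat \<Rightarrow> real \<Rightarrow> nat" where "DH d r = (d + 1) ^ Rn r"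
definition sQ :: "nat \<Rightarrow> nat \<Rightarrow> real \<Rightarrow> nat" where "sQ k d r = sepf (k * DH d r) (Suc (DH d r))"
definition aQ :: "nat \<Rightarrow> nat \<Rightarrow> real \<Rightarrow> nat" where "aQ k d r = max 1 (2 * DH d r * sQ k d r)"
definition Wb :: "nat \<Rightarrow> nat \<Rightarrow> real \<Rightarrow> nat" where "Wb k d r = aQ k d r + sQ k d r"
definition Dfun :: "nat \<Rightarrow> nat \<Rightarrow> real \<Rightarrow> real" where
  "Dfun k d r = real (Wb k d r * Wb k d r * Rn r) + 1"

lemma graph_cover:
  fixes V :: "'a set" and N :: "nat set"
  assumes fg: "fin_graph V E" and td: "tree_decomposition V E N F B"
  and bags: "\<And>n. n \<in> N \<Longrightarrow> card (B n) \<le> k"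
  and deg: "\<And>v. card {u. (v, u) \<in> E} \<le> d" and rpos: "r > 0"
  shows "\<exists>\<U> :: nat \<Rightarrow> 'a set set. (\<Union>i\<le>1. \<Union>(\<U> i)) = V \<and>
     (\<forall>i\<le>1. r_disjoint E r (\<U> i) \<and> D_bounded E (Dfun k d r) (\<U> i))"
proof -
  have finV: "finite V" and EV: "E \<subseteq> V \<times> V" and symE: "sym E"
    using fg unfolding fin_graph_def by auto
  have tree: "is_tree N F" using td unfolding tree_decomposition_def by simp
  obtain \<rho> dep p where rt: "\<rho> \<in> N" "dep \<rho> = (0::nat)" "\<And>x. x \<in> N \<Longrightarrow> dep x = 0 \<Longrightarrow> x = \<rho>"
    "\<And>x. x \<in> N \<Longrightarrow> x \<noteq> \<rho> \<Longrightarrow> p x \<in> N \<and> (x, p x) \<in> F \<and> dep (p x) + 1 = dep x"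
    "\<And>x y. (x, y) \<in> F \<Longrightarrow> (x \<noteq> \<rho> \<and> y = p x) \<or> (y \<noteq> \<rho> \<and> x = p y)"
    "p \<rho> = \<rho>"
    by (rule rooted_tree[OF tree]) blast
  interpret rtd V E N F B \<rho> dep p
    by (rule rtd.intro[OF td rt(1) rt(2) rt(3) rt(4) rt(5) rt(6)])
  define H where "H = {(x, y). x \<in> V \<and> y \<in> V \<and> gdist E x y \<le> ereal r}"
  have HV: "H \<subseteq> V \<times> V" unfolding H_def by auto
  have symH: "sym H" unfolding H_def sym_def using gdist_sym[OF symE] by auto
  have Hself: "(x, x) \<in> H" if "x \<in> V" for x using that less_imp_le[OF rpos] unfolding H_def by (simp add: gdist_self)
  let ?DH = "DH d r"
  have degH: "card {y. (x, y) \<in> H} \<le> ?DH" for x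
  proof -
    have "{y. (x, y) \<in> H} \<subseteq> ballset E x (Rn r)"
    proof
      fix y assume "y \<in> {y. (x, y) \<in> H}"
      then obtain xs where "is_walk E xs" "hd xs = x" "last xs = y" "real (length xs - 1) \<le> r"
        unfolding H_def gdist_le_iff by blast
      then show "y \<in> ballset E x (Rn r)" unfolding ballset_def Rn_def using walk_le_floor by blast
    qed
    moreover have "finite (ballset E x (Rn r)) \<and> card (ballset E x (Rn r)) \<le> (d + 1) ^ Rn r"
      by (rule ballset_card[OF EV finV deg])
    ultimately show ?thesis unfolding DH_def using card_mono le_trans by blast
  qed
  have finH: "finite {y. (x, y) \<in> H}" for x
  proof -
    have "{y. (x, y) \<in> H} \<subseteq> V" using HV by blast
    then show ?thesis using finite_subset finV by blast
  qed
  have sep1: "\<exists>X \<subseteq> U. card X \<le> k * ?DH \<and> (\<forall>u\<in>U - X. 2 * card (W \<inter> reach H (U - X) u) \<le> card W)"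
    if UW: "U \<subseteq> V" "W \<subseteq> U" for U W
  proof -
    obtain n where n: "n \<in> N" "\<And>u. u \<in> V - B n \<Longrightarrow> 2 * card (W \<inter> reach E (V - B n) u) \<le> card W"
      using separator[of W] UW finV by blast
    define X where "X = {x \<in> U. \<exists>y\<in>B n. (y, x) \<in> H}"
    have finB: "finite (B n)" using finite_subset[OF bag_sub[OF n(1)] finV] .
    have "X \<subseteq> {w. \<exists>y\<in>B n. (y, w) \<in> H}" unfolding X_def by blast
    moreover have "{w. \<exists>y\<in>B n. (y, w) \<in> H} \<subseteq> V" using HV by blast
    then have "finite {w. \<exists>y\<in>B n. (y, w) \<in> H}" using finV by (rule finite_subset)
    ultimately have "card X \<le> card {w. \<exists>y\<in>B n. (y, w) \<in> H}" by (rule card_mono[rotated])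
    also have "\<dots> \<le> ?DH * card (B n)" by (rule nbr_card[OF finB degH finH])
    also have "\<dots> \<le> ?DH * k" using bags[OF n(1)] by simp
    finally have cardX: "card X \<le> k * ?DH" by (simp add: mult.commute)
    have main: "2 * card (W \<inter> reach H (U - X) u) \<le> card W" if u: "u \<in> U - X" for u
    proof -
      have uV: "u \<in> V" using u UW by auto
      have uB: "u \<notin> B n" using u Hself[OF uV] unfolding X_def by blast
      have "reach H (U - X) u \<subseteq> reach E (V - B n) u"
      proof
        fix w assume "w \<in> reach H (U - X) u"
        then have "(u, w) \<in> (conn H (U - X))\<^sup>*" unfolding reach_def by simp
        then have "(u, w) \<in> (conn E (V - B n))\<^sup>*"
        proof (induction rule: rtrancl_induct)
          case base then show ?case by simp
        next
          case (step y z)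
          have yz: "y \<in> U - X" "z \<in> U - X" "gdist E y z \<le> ereal r" "y \<in> V"
            using step.hyps(2) unfolding conn_def H_def by auto
          obtain xs where xs: "is_walk E xs" "hd xs = y" "last xs = z" "real (length xs - 1) \<le> r"
            using yz(3) unfolding gdist_le_iff by blast
          have setV: "set xs \<subseteq> V" using is_walk_set[OF xs(1) EV] xs(2) yz(4) by simp
          have "set xs \<subseteq> V - B n"
          proof
            fix w assume "w \<in> set xs"
            then obtain i where i: "i < length xs" "xs ! i = w" by (auto simp: in_set_conv_nth)
            have "is_walk E (take (Suc i) xs)" using is_walk_take[OF xs(1)] by simp
            moreover have "hd (take (Suc i) xs) = y" using xs(2) i(1) by (cases xs) auto
            moreover have "last (take (Suc i) xs) = w"
            proof -
              have ne: "take (Suc i) xs \<noteq> []" using i(1) by (cases xs) auto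
              have "length (take (Suc i) xs) = Suc i" using i(1) by simp
              then show ?thesis using last_conv_nth[OF ne] i by simp
            qed
            moreover have "real (length (take (Suc i) xs) - 1) \<le> r" using xs(4) i(1) by simp
            ultimately have "gdist E y w \<le> ereal r" unfolding gdist_le_iff by blast
            then have "gdist E w y \<le> ereal r" by (rule gdist_sym[OF symE])
            moreover have wV: "w \<in> V" using setV \<open>w \<in> set xs\<close> by blast
            ultimately have "(w, y) \<in> H" using yz(4) unfolding H_def by simp
            then have "w \<notin> B n" using yz(1) unfolding X_def by blast
            then show "w \<in> V - B n" using wV by blast
          qed
          then have "(y, z) \<in> (conn E (V - B n))\<^sup>*" using walk_conn[OF xs(1)] xs(2,3) by simp
          then show ?case using step.IH by (rule rtrancl_trans[rotated])
        qed
        then show "w \<in> reach E (V - B n) u" unfolding reach_def by simp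
      qed
      then have "card (W \<inter> reach H (U - X) u) \<le> card (W \<inter> reach E (V - B n) u)"
        using finite_subset[OF UW(2) finite_subset[OF UW(1) finV]] by (intro card_mono) auto
      then show ?thesis using n(2)[of u] uV uB by simp
    qed
    have "X \<subseteq> U" unfolding X_def by blast
    then show ?thesis using cardX main by blast
  qed
  let ?q = "Suc ?DH"
  have sepq: "\<exists>X \<subseteq> U. card X \<le> sQ k d r \<and> (\<forall>u\<in>U - X. 2 ^ ?q * card (W \<inter> reach H (U - X) u) \<le> card W)"
    if "U \<subseteq> V" "W \<subseteq> U" for U W
    unfolding sQ_def by (rule sep_iter[OF finV symH sep1 that])
  have DQ: "2 * ?DH \<le> 2 ^ ?q" using less_exp[of ?DH] by simp
  have Da: "2 * ?DH * sQ k d r \<le> aQ k d r" unfolding aQ_def by simp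
  have a1: "1 \<le> aQ k d r" unfolding aQ_def by simp
  obtain c where c: "\<forall>v\<in>V. card (mreach H V c v) \<le> aQ k d r + sQ k d r"
    using clustered[OF finV HV symH degH sepq DQ Da a1, of V "{}" True] by auto
  have cW: "card (mreach H V c v) \<le> Wb k d r" if "v \<in> V" for v
    using c that unfolding Wb_def by simp
  have symM: "sym (mrel H V c)" using symH unfolding sym_def mrel_def by auto
  have msub: "mreach H V c v \<subseteq> V" if "v \<in> V" for v by (rule mreach_sub[OF that])
  have mcol: "c w = c v" if "w \<in> mreach H V c v" for v w
  proof -
    have "(v, w) \<in> (mrel H V c)\<^sup>*" using that unfolding mreach_def by simp
    then show ?thesis by (induction rule: rtrancl_induct) (auto simp: mrel_def)
  qed
  have meq: "mreach H V c w = mreach H V c v" if "w \<in> mreach H V c v" for v w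
  proof -
    have s: "sym ((mrel H V c)\<^sup>*)" using symM by (rule sym_rtrancl)
    have vw: "(v, w) \<in> (mrel H V c)\<^sup>*" using that unfolding mreach_def by simp
    then have wv: "(w, v) \<in> (mrel H V c)\<^sup>*" using s by (auto dest: symD)
    show ?thesis unfolding mreach_def using vw wv by (auto intro: rtrancl_trans)
  qed
  define \<U> where "\<U> i = {mreach H V c v | v. v \<in> V \<and> c v = (i = (0::nat))}" for i
  show ?thesis
  proof (intro exI[of _ \<U>] conjI allI impI)
    show "(\<Union>i\<le>1. \<Union>(\<U> i)) = V"
    proof
      show "(\<Union>i\<le>1. \<Union>(\<U> i)) \<subseteq> V" unfolding \<U>_def using msub by blast
      show "V \<subseteq> (\<Union>i\<le>1. \<Union>(\<U> i))"
      proof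
        fix v assume v: "v \<in> V"
        have vm: "v \<in> mreach H V c v" unfolding mreach_def by simp
        define i where "i = (if c v then 0 else 1::nat)"
        have "i \<le> 1" "c v = (i = 0)" unfolding i_def by auto
        then show "v \<in> (\<Union>i\<le>1. \<Union>(\<U> i))" unfolding \<U>_def using v vm by blast
      qed
    qed
  next
    fix i :: nat assume "i \<le> 1"
    show "r_disjoint E r (\<U> i)" unfolding r_disjoint_def
    proof (intro ballI impI)
      fix A B x y assume AB: "A \<in> \<U> i" "B \<in> \<U> i" "A \<noteq> B" and xy: "x \<in> A" "y \<in> B"
      obtain v where v: "A = mreach H V c v" "v \<in> V" "c v = (i = 0)" using AB(1) unfolding \<U>_def by blast
      obtain v' where v': "B = mreach H V c v'" "v' \<in> V" "c v' = (i = 0)" using AB(2) unfolding \<U>_def by blast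
      show "ereal r < gdist E x y"
      proof (rule ccontr)
        assume "\<not> ereal r < gdist E x y"
        then have g: "gdist E x y \<le> ereal r" by simp
        have xV: "x \<in> V" using xy(1) v msub by blast
        have yV: "y \<in> V" using xy(2) v' msub by blast
        have "c x = c y" using mcol[of x v] mcol[of y v'] xy v v' by simp
        then have "(x, y) \<in> mrel H V c" using g xV yV unfolding mrel_def H_def by simp
        then have "y \<in> mreach H V c x" unfolding mreach_def by auto
        then have "mreach H V c y = mreach H V c x" by (rule meq)
        also have "\<dots> = A" using meq[of x v] xy v by simp
        finally have "A = mreach H V c y" by simp
        moreover have "mreach H V c y = B" using meq[of y v'] xy v' by simp
        ultimately show False using AB(3) by simp
      qed
    qed
    show "D_bounded E (Dfun k d r) (\<U> i)" unfolding D_bounded_def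
    proof (intro ballI)
      fix A x y assume A: "A \<in> \<U> i" and xy: "x \<in> A" "y \<in> A"
      obtain v where v: "A = mreach H V c v" "v \<in> V" using A unfolding \<U>_def by blast
      define R' where "R' = mrel H V c \<inter> (A \<times> A)"
      have AV: "A \<subseteq> V" using msub v by blast
      have finA: "finite A" using finite_subset[OF AV finV] .
      have cardA: "card A \<le> Wb k d r" using cW v by simp
      have inA: "(v, w) \<in> R'\<^sup>*" if "w \<in> A" for w
      proof -
        have "(v, w) \<in> (mrel H V c)\<^sup>*" using that v unfolding mreach_def by simp
        then show ?thesis
        proof (induction rule: rtrancl_induct)
          case base then show ?case by simp
        next
          case (step y z)
          have "y \<in> A" using step.hyps(1) v unfolding mreach_def by simp
          moreover have "z \<in> A" using step.hyps v unfolding mreach_def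
            by (meson mem_Collect_eq rtrancl.rtrancl_into_rtrancl)
          ultimately have "(y, z) \<in> R'" using step.hyps(2) unfolding R'_def by simp
          then show ?case using step.IH by (rule rtrancl.rtrancl_into_rtrancl[rotated])
        qed
      qed
      have symR': "sym R'" using symM unfolding R'_def sym_def by auto
      have "(x, v) \<in> R'\<^sup>*" using inA[OF xy(1)] sym_rtrancl[OF symR'] by (auto dest: symD)
      then have xyR: "(x, y) \<in> R'\<^sup>*" using inA[OF xy(2)] by (rule rtrancl_trans)
      have finR: "finite R'" unfolding R'_def using finA by auto
      have "card R' \<le> card (A \<times> A)" unfolding R'_def using finA by (intro card_mono) auto
      also have "\<dots> = card A * card A" by (simp add: card_cartesian_product)
      also have "\<dots> \<le> Wb k d r * Wb k d r" using cardA by (intro mult_le_mono) auto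
      finally have cardR: "card R' \<le> Wb k d r * Wb k d r" .
      obtain n0 where "(x, y) \<in> R' ^^ n0" using xyR rtrancl_power by blast
      then obtain n where n: "(x, y) \<in> R' ^^ n" "n \<le> card R'"
        using relpow_finite_bounded[OF finR, of n0] by blast
      have step: "\<exists>xs. is_walk E xs \<and> hd xs = a \<and> last xs = b \<and> length xs \<le> Suc (Rn r)"
        if "(a, b) \<in> R'" for a b
      proof -
        have "gdist E a b \<le> ereal r" using that unfolding R'_def mrel_def H_def by simp
        then obtain xs where "is_walk E xs" "hd xs = a" "last xs = b" "real (length xs - 1) \<le> r"
          unfolding gdist_le_iff by blast
        then show ?thesis unfolding Rn_def using walk_le_floor by blast
      qed
      obtain xs where xs: "is_walk E xs" "hd xs = x" "last xs = y" "length xs \<le> Suc (n * Rn r)"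
        using relpow_walk[OF step n(1)] by blast
      have g1: "gdist E x y \<le> ereal (real (length xs - 1))" by (rule gdist_le_walk[OF xs(1-3)])
      have "length xs - 1 \<le> n * Rn r" using xs(4) by linarith
      also have "n * Rn r \<le> Wb k d r * Wb k d r * Rn r"
        using n(2) cardR by (intro mult_le_mono1) simp
      finally have "real (length xs - 1) \<le> real (Wb k d r * Wb k d r * Rn r)" by (rule of_nat_mono)
      then have "real (length xs - 1) \<le> Dfun k d r" unfolding Dfun_def by simp
      then have "ereal (real (length xs - 1)) \<le> ereal (Dfun k d r)" by simp
      then show "gdist E x y \<le> ereal (Dfun k d r)" using g1 by (rule order_trans[rotated])
    qed
  qed
qed



theorem theorem5p5:
  fixes t \<Delta> :: int
  shows "asdim_at_most 1
           {(V, E :: (nat \<times> nat) set). fin_graph V E \<and> treewidth V E \<le> t \<and> int (max_degree V E) \<le> \<Delta>}"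
proof -
  let ?k = "nat (t + 1)" and ?d = "nat \<Delta>"
  have pos: "\<forall>r>0. Dfun ?k ?d r > 0"
  proof (intro allI impI)
    fix r :: real
    have "0 \<le> real (Wb ?k ?d r * Wb ?k ?d r * Rn r)" by (rule of_nat_0_le_iff)
    then show "Dfun ?k ?d r > 0" unfolding Dfun_def by linarith
  qed
  have cf: "control_function 1 (Dfun ?k ?d) V E"
    if fg: "fin_graph V E" and tw: "treewidth V E \<le> t" and md: "int (max_degree V E) \<le> \<Delta>"
    for V :: "nat set" and E
  proof -
    obtain N F B where td: "tree_decomposition V E (N::nat set) F B" and bags: "\<forall>n\<in>N. card (B n) \<le> ?k"
      using tw_decomp[OF fg tw] by blast
    have deg: "card {u. (v, u) \<in> E} \<le> ?d" for v using deg_bound[OF fg md] .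
    show ?thesis unfolding control_function_def
    proof (intro allI impI)
      fix r :: real assume "r > 0"
      then show "\<exists>\<U> :: nat \<Rightarrow> nat set set. (\<Union>i\<le>1. \<Union>(\<U> i)) = V \<and>
          (\<forall>i\<le>1. r_disjoint E r (\<U> i) \<and> D_bounded E (Dfun ?k ?d r) (\<U> i))"
        using graph_cover[OF fg td _ deg] bags by blast
    qed
  qed
  show ?thesis unfolding asdim_at_most_def
  proof (intro exI[of _ "Dfun ?k ?d"] conjI pos ballI)
    fix G assume "G \<in> {(V, E :: (nat \<times> nat) set). fin_graph V E \<and> treewidth V E \<le> t \<and> int (max_degree V E) \<le> \<Delta>}"
    then obtain V E where G: "G = (V, E)" "fin_graph V E" "treewidth V E \<le> t" "int (max_degree V E) \<le> \<Delta>"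
      by blast
    then show "case G of (V, E) \<Rightarrow> control_function 1 (Dfun ?k ?d) V E" using cf by simp
  qed
qed


end
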